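(* Let $c\ge 0$, $m\ge 2$, and let $x=((x^1,n_1),\dots,(x^q,n_q))$ be a profile with $q\ge 2$. Suppose candidate $i$ is located at $x^l$ and $n_l=2$. Then $$v_i(x^{l-},x_{-i})+v_i(x^{l+},x_{-i})=2v_i(x).$$ In particular, if $x$ is a non-convergent Nash equilibrium of the rule $s=(c,m)$, then $v_i(x^{l-},x_{-i})=v_i(x^{l+},x_{-i})=v_i(x)$.
   Context: Setting: voters' ideal points are distributed uniformly (unit mass, Lebesgue measure) on $[0,1]$. There are $m$ candidates; a profile is $x=(x_1,\dots,x_m)\in[0,1]^m$. A voter with ideal point $y$ ranks candidates by distance $|x_i-y|$ (closer is better); ties are broken by a fair lottery (uniformly random strict order among tied candidates). Under the best-worst rule $s=(c,m)$ ($c\ge0$), a candidate receives $1$ point from each voter ranking her first, $-c$ from each voter ranking her last ($m$-th), and $0$ otherwise; $v_i(x)$ is candidate $i$'s expected total points. $(t,x_{-i})$ denotes $x$ with $x_i$ replaced by $t$. For a point $p$, $v_i(p^-,x_{-i}):=\lim_{t\uparrow p}v_i(t,x_{-i})$ and $v_i(p^+,x_{-i}):=\lim_{t\downarrow p}v_i(t,x_{-i})$ (scores after an infinitesimal move just left, resp. right, of $p$). A (pure-strategy Nash) equilibrium is a profile $x^*$ with $v_i(x^* )\ge v_i(t,x^*_{-i})$ for all $i$ and $t\in[0,1]$; it is non-convergent if at least two platforms are distinct. A profile determines its distinct occupied positions $x^1<\dots<x^q$, with $n_j$ the number of candidates at $x^j$; we write $x=((x^1,n_1),\dots,(x^q,n_q))$.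 *)

theory Defs
  imports "HOL-Analysis.Analysis"
begin

text \<open>Candidates are indexed by 0,...,m-1; a profile is a function x :: nat => real
  (only the values at indices < m matter). Voters are uniform on [0,1].\<close>

definition closest :: "nat \<Rightarrow> (nat \<Rightarrow> real) \<Rightarrow> real \<Rightarrow> nat set" where
  "closest m x y = {j. j < m \<and> (\<forall>k<m. \<bar>x j - y\<bar> \<le> \<bar>x k - y\<bar>)}"

definition farthest :: "nat \<Rightarrow> (nat \<Rightarrow> real) \<Rightarrow> real \<Rightarrow> nat set" where
  "farthest m x y = {j. j < m \<and> (\<forall>k<m. \<bar>x k - y\<bar> \<le> \<bar>x j - y\<bar>)}"

text \<open>Expected points voter y gives candidate i under the best-worst rule (c,m) with
  fair-lottery tie-breaking: probability of being ranked first is 1/|closest| if i is among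
  the closest, probability of being ranked last is 1/|farthest| if i is among the farthest.\<close>
definition voter_points :: "real \<Rightarrow> nat \<Rightarrow> (nat \<Rightarrow> real) \<Rightarrow> nat \<Rightarrow> real \<Rightarrow> real" where
  "voter_points c m x i y =
     (if i \<in> closest m x y then 1 / real (card (closest m x y)) else 0)
     - c * (if i \<in> farthest m x y then 1 / real (card (farthest m x y)) else 0)"

definition score :: "real \<Rightarrow> nat \<Rightarrow> (nat \<Rightarrow> real) \<Rightarrow> nat \<Rightarrow> real" where
  "score c m x i = integral {0..1} (voter_points c m x i)"

definition is_profile :: "nat \<Rightarrow> (nat \<Rightarrow> real) \<Rightarrow> bool" where
  "is_profile m x \<longleftrightarrow> (\<forall>j<m. x j \<in> {0..1})"

definition nash_eq :: "real \<Rightarrow> nat \<Rightarrow> (nat \<Rightarrow> real) \<Rightarrow> bool" where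
  "nash_eq c m x \<longleftrightarrow> is_profile m x \<and>
     (\<forall>j<m. \<forall>t\<in>{0..1}. score c m (x(j := t)) j \<le> score c m x j)"

definition non_convergent :: "nat \<Rightarrow> (nat \<Rightarrow> real) \<Rightarrow> bool" where
  "non_convergent m x \<longleftrightarrow> (\<exists>j<m. \<exists>k<m. x j \<noteq> x k)"

end

theory Submission
  imports Defs
begin
lemma card_eq_sum_ind: "real (card {j. j < (m::nat) \<and> P j}) = (\<Sum>j<m. if P j then 1 else 0)"
proof -
  have "{j. j < m \<and> P j} = {j\<in>{..<m}. P j}" by auto
  then have "real (card {j. j < m \<and> P j}) = (\<Sum>j\<in>{j\<in>{..<m}. P j}. 1)" by simp
  also have "\<dots> = (\<Sum>j<m. if P j then 1 else 0)" by (rule sum.inter_filter) simp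
  finally show ?thesis .
qed
lemma vp_meas: "voter_points c m x i \<in> borel_measurable borel"
proof -
  have eq: "voter_points c m x i = (\<lambda>y. (if i < m \<and> (\<forall>k<m. \<bar>x i - y\<bar> \<le> \<bar>x k - y\<bar>) then 1 / (\<Sum>j<m. if (\<forall>k<m. \<bar>x j - y\<bar> \<le> \<bar>x k - y\<bar>) then 1 else 0) else 0)
     - c * (if i < m \<and> (\<forall>k<m. \<bar>x k - y\<bar> \<le> \<bar>x i - y\<bar>) then 1 / (\<Sum>j<m. if (\<forall>k<m. \<bar>x k - y\<bar> \<le> \<bar>x j - y\<bar>) then 1 else 0) else 0))"
    unfolding voter_points_def closest_def farthest_def
    by (auto simp: card_eq_sum_ind[symmetric] intro!: ext)
  show ?thesis unfolding eq by measurable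
qed
lemma inv_bound: "0 \<le> 1 / real n \<and> 1 / real n \<le> (1::real)"
  by (cases n) (auto simp: divide_simps)
lemma vp_bound: "\<bar>voter_points c m x i y\<bar> \<le> 1 + \<bar>c\<bar>"
proof -
  have a: "\<bar>(if i \<in> closest m x y then 1 / real (card (closest m x y)) else 0)\<bar> \<le> 1"
    using inv_bound[of "card (closest m x y)"] by auto
  have b: "\<bar>(if i \<in> farthest m x y then 1 / real (card (farthest m x y)) else 0)\<bar> \<le> 1"
    using inv_bound[of "card (farthest m x y)"] by auto
  have "\<bar>c * (if i \<in> farthest m x y then 1 / real (card (farthest m x y)) else 0)\<bar> \<le> \<bar>c\<bar>"
    using b by (simp add: abs_mult mult_left_le)
  with a show ?thesis unfolding voter_points_def by linarith
qed
lemma vp_int: "voter_points c m x i integrable_on {0..1}"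
proof (rule measurable_bounded_by_integrable_imp_integrable[where g = "\<lambda>_. 1 + \<bar>c\<bar>"])
  show "voter_points c m x i \<in> borel_measurable (lebesgue_on {0..1})"
    by (rule measurable_restrict_space1, rule measurable_completion) (simp add: vp_meas)
qed (auto simp: vp_bound)
definition Vc :: "nat \<Rightarrow> (nat \<Rightarrow> real) \<Rightarrow> nat \<Rightarrow> real \<Rightarrow> real" where
  "Vc m x i y = (if i \<in> closest m x y then 1 else 0)"
definition Vf :: "real \<Rightarrow> nat \<Rightarrow> (nat \<Rightarrow> real) \<Rightarrow> nat \<Rightarrow> real \<Rightarrow> real" where
  "Vf c m x i y = - c * (if i \<in> farthest m x y then 1 else 0)"

definition H1 :: "nat \<Rightarrow> (nat \<Rightarrow> real) \<Rightarrow> real \<Rightarrow> real \<Rightarrow> real \<Rightarrow> bool" where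
  "H1 m x p y t \<longleftrightarrow> (\<forall>j<m. x j \<noteq> p \<longrightarrow>
     (\<bar>x j - y\<bar> < \<bar>t - y\<bar> \<longleftrightarrow> \<bar>x j - y\<bar> < \<bar>p - y\<bar>) \<and> (\<bar>t - y\<bar> < \<bar>x j - y\<bar> \<longleftrightarrow> \<bar>p - y\<bar> < \<bar>x j - y\<bar>))"

lemma closer_case:
  assumes i: "i < m" and k: "k < m" "k \<noteq> i" "x k = x i"
    and H: "H1 m x (x i) y t"
    and cl: "\<bar>t - y\<bar> < \<bar>x i - y\<bar>"
  shows "voter_points c m (x(i:=t)) i y = Vc m x i y"
proof -
  have nf: "i \<notin> farthest m (x(i:=t)) y"
  proof
    assume "i \<in> farthest m (x(i:=t)) y"
    then have "\<bar>(x(i:=t)) k - y\<bar> \<le> \<bar>(x(i:=t)) i - y\<bar>" using k unfolding farthest_def by blast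
    then show False using k cl by simp
  qed
  have per: "\<bar>t - y\<bar> \<le> \<bar>(x(i:=t)) l - y\<bar> \<longleftrightarrow> \<bar>x i - y\<bar> \<le> \<bar>x l - y\<bar>" if l: "l < m" for l
  proof (cases "l = i")
    case True then show ?thesis by simp
  next
    case False
    show ?thesis
    proof (cases "x l = x i")
      case True with False cl show ?thesis by simp
    next
      case ne: False
      with H l have "\<bar>x l - y\<bar> < \<bar>t - y\<bar> \<longleftrightarrow> \<bar>x l - y\<bar> < \<bar>x i - y\<bar>" unfolding H1_def by blast
      with False show ?thesis by (auto simp add: not_less[symmetric])
    qed
  qed
  have iff: "i \<in> closest m (x(i:=t)) y \<longleftrightarrow> i \<in> closest m x y"
    unfolding closest_def using per i by auto
  have single: "closest m (x(i:=t)) y = {i}" if ic: "i \<in> closest m (x(i:=t)) y"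
  proof
    show "{i} \<subseteq> closest m (x(i:=t)) y" using ic by simp
    show "closest m (x(i:=t)) y \<subseteq> {i}"
    proof
      fix j assume j: "j \<in> closest m (x(i:=t)) y"
      show "j \<in> {i}"
      proof (rule ccontr)
        assume ji: "j \<notin> {i}"
        from j have jm: "j < m" unfolding closest_def by simp
        from j i have a: "\<bar>x j - y\<bar> \<le> \<bar>t - y\<bar>" unfolding closest_def using ji by (auto dest!: spec[of _ i])
        from ic jm have b: "\<bar>t - y\<bar> \<le> \<bar>x j - y\<bar>" unfolding closest_def using ji by (auto dest!: spec[of _ j])
        show False
        proof (cases "x j = x i")
          case True with a b cl show False by simp
        next
          case False
          with H jm have "\<bar>x j - y\<bar> < \<bar>t - y\<bar> \<longleftrightarrow> \<bar>x j - y\<bar> < \<bar>x i - y\<bar>" unfolding H1_def by blast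
          with a b cl show False by linarith
        qed
      qed
    qed
  qed
  show ?thesis
  proof (cases "i \<in> closest m x y")
    case True
    then have "closest m (x(i:=t)) y = {i}" using iff single by blast
    then show ?thesis unfolding voter_points_def Vc_def using nf True by simp
  next
    case False
    then show ?thesis unfolding voter_points_def Vc_def using nf iff by simp
  qed
qed

lemma farther_case:
  assumes i: "i < m" and k: "k < m" "k \<noteq> i" "x k = x i"
    and H: "H1 m x (x i) y t"
    and cl: "\<bar>x i - y\<bar> < \<bar>t - y\<bar>"
  shows "voter_points c m (x(i:=t)) i y = Vf c m x i y"
proof -
  have nf: "i \<notin> closest m (x(i:=t)) y"
  proof
    assume "i \<in> closest m (x(i:=t)) y"
    then have "\<bar>(x(i:=t)) i - y\<bar> \<le> \<bar>(x(i:=t)) k - y\<bar>" using k unfolding closest_def by blast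
    then show False using k cl by simp
  qed
  have per: "\<bar>(x(i:=t)) l - y\<bar> \<le> \<bar>t - y\<bar> \<longleftrightarrow> \<bar>x l - y\<bar> \<le> \<bar>x i - y\<bar>" if l: "l < m" for l
  proof (cases "l = i")
    case True then show ?thesis by simp
  next
    case False
    show ?thesis
    proof (cases "x l = x i")
      case True with False cl show ?thesis by simp
    next
      case ne: False
      with H l have "\<bar>t - y\<bar> < \<bar>x l - y\<bar> \<longleftrightarrow> \<bar>x i - y\<bar> < \<bar>x l - y\<bar>" unfolding H1_def by blast
      with False show ?thesis by (auto simp add: not_less[symmetric])
    qed
  qed
  have iff: "i \<in> farthest m (x(i:=t)) y \<longleftrightarrow> i \<in> farthest m x y"
    unfolding farthest_def using per i by auto
  have single: "farthest m (x(i:=t)) y = {i}" if ic: "i \<in> farthest m (x(i:=t)) y"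
  proof
    show "{i} \<subseteq> farthest m (x(i:=t)) y" using ic by simp
    show "farthest m (x(i:=t)) y \<subseteq> {i}"
    proof
      fix j assume j: "j \<in> farthest m (x(i:=t)) y"
      show "j \<in> {i}"
      proof (rule ccontr)
        assume ji: "j \<notin> {i}"
        from j have jm: "j < m" unfolding farthest_def by simp
        from j i have a: "\<bar>t - y\<bar> \<le> \<bar>x j - y\<bar>" unfolding farthest_def using ji by (auto dest!: spec[of _ i])
        from ic jm have b: "\<bar>x j - y\<bar> \<le> \<bar>t - y\<bar>" unfolding farthest_def using ji by (auto dest!: spec[of _ j])
        show False
        proof (cases "x j = x i")
          case True with a b cl show False by simp
        next
          case False
          with H jm have "\<bar>t - y\<bar> < \<bar>x j - y\<bar> \<longleftrightarrow> \<bar>x i - y\<bar> < \<bar>x j - y\<bar>" unfolding H1_def by blast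
          with a b cl show False by linarith
        qed
      qed
    qed
  qed
  show ?thesis
  proof (cases "i \<in> farthest m x y")
    case True
    then have "farthest m (x(i:=t)) y = {i}" using iff single by blast
    then show ?thesis unfolding voter_points_def Vf_def using nf True by simp
  next
    case False
    then show ?thesis unfolding voter_points_def Vf_def using nf iff by simp
  qed
qed

lemma mid_case:
  assumes i: "i < m" and card: "card {j. j < m \<and> x j = x i} = 2"
    and H2: "\<forall>j<m. x j \<noteq> x i \<longrightarrow> \<bar>x i - y\<bar> \<noteq> \<bar>x j - y\<bar>"
  shows "voter_points c m x i y = (Vc m x i y + Vf c m x i y) / 2"
proof -
  have C: "closest m x y = {j. j < m \<and> x j = x i}" if ic: "i \<in> closest m x y"
  proof
    show "closest m x y \<subseteq> {j. j < m \<and> x j = x i}"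
    proof
      fix j assume j: "j \<in> closest m x y"
      then have jm: "j < m" unfolding closest_def by simp
      from j i have "\<bar>x j - y\<bar> \<le> \<bar>x i - y\<bar>" unfolding closest_def by auto
      moreover from ic jm have "\<bar>x i - y\<bar> \<le> \<bar>x j - y\<bar>" unfolding closest_def by auto
      ultimately show "j \<in> {j. j < m \<and> x j = x i}" using H2 jm by force
    qed
    show "{j. j < m \<and> x j = x i} \<subseteq> closest m x y" using ic unfolding closest_def by auto
  qed
  have F: "farthest m x y = {j. j < m \<and> x j = x i}" if ic: "i \<in> farthest m x y"
  proof
    show "farthest m x y \<subseteq> {j. j < m \<and> x j = x i}"
    proof
      fix j assume j: "j \<in> farthest m x y"
      then have jm: "j < m" unfolding farthest_def by simp
      from j i have "\<bar>x i - y\<bar> \<le> \<bar>x j - y\<bar>" unfolding farthest_def by auto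
      moreover from ic jm have "\<bar>x j - y\<bar> \<le> \<bar>x i - y\<bar>" unfolding farthest_def by auto
      ultimately show "j \<in> {j. j < m \<and> x j = x i}" using H2 jm by force
    qed
    show "{j. j < m \<and> x j = x i} \<subseteq> farthest m x y" using ic unfolding farthest_def by auto
  qed
  show ?thesis
    unfolding voter_points_def Vc_def Vf_def
    by (cases "i \<in> closest m x y"; cases "i \<in> farthest m x y") (simp_all add: C F card)
qed

lemma ev_H1:
  assumes T0: "((\<lambda>t. t) \<longlongrightarrow> p) F" and H2: "\<forall>j<m. x j \<noteq> p \<longrightarrow> \<bar>p - y\<bar> \<noteq> \<bar>x j - y\<bar>"
  shows "eventually (\<lambda>t. H1 m x p y t) F"
proof -
  have T: "((\<lambda>t. \<bar>t - y\<bar>) \<longlongrightarrow> \<bar>p - y\<bar>) F" by (intro tendsto_intros T0)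
  have "\<forall>j\<in>{..<m}. eventually (\<lambda>t. x j \<noteq> p \<longrightarrow>
     (\<bar>x j - y\<bar> < \<bar>t - y\<bar> \<longleftrightarrow> \<bar>x j - y\<bar> < \<bar>p - y\<bar>) \<and> (\<bar>t - y\<bar> < \<bar>x j - y\<bar> \<longleftrightarrow> \<bar>p - y\<bar> < \<bar>x j - y\<bar>)) F"
  proof
    fix j assume j: "j \<in> {..<m}"
    show "eventually (\<lambda>t. x j \<noteq> p \<longrightarrow>
     (\<bar>x j - y\<bar> < \<bar>t - y\<bar> \<longleftrightarrow> \<bar>x j - y\<bar> < \<bar>p - y\<bar>) \<and> (\<bar>t - y\<bar> < \<bar>x j - y\<bar> \<longleftrightarrow> \<bar>p - y\<bar> < \<bar>x j - y\<bar>)) F"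
    proof (cases "x j = p")
      case True then show ?thesis by simp
    next
      case False
      with H2 j have "\<bar>p - y\<bar> < \<bar>x j - y\<bar> \<or> \<bar>x j - y\<bar> < \<bar>p - y\<bar>" by force
      then show ?thesis
      proof
        assume a: "\<bar>p - y\<bar> < \<bar>x j - y\<bar>"
        from order_tendstoD(2)[OF T a] show ?thesis by eventually_elim (use a in auto)
      next
        assume a: "\<bar>x j - y\<bar> < \<bar>p - y\<bar>"
        from order_tendstoD(1)[OF T a] show ?thesis by eventually_elim (use a in auto)
      qed
    qed
  qed
  from eventually_ball_finite[OF _ this] show ?thesis
    unfolding H1_def by (rule eventually_mono) auto
qed

lemma ev_left:
  assumes i: "i < m" and k: "k < m" "k \<noteq> i" "x k = x i"
    and H2: "\<forall>j<m. x j \<noteq> x i \<longrightarrow> \<bar>x i - y\<bar> \<noteq> \<bar>x j - y\<bar>" and yp: "y \<noteq> x i"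
  shows "eventually (\<lambda>t. voter_points c m (x(i:=t)) i y = (if y < x i then Vc m x i y else Vf c m x i y)) (at_left (x i))"
proof -
  have h: "eventually (\<lambda>t. H1 m x (x i) y t) (at_left (x i))" by (rule ev_H1[OF tendsto_ident_at H2])
  show ?thesis
  proof (cases "y < x i")
    case True
    from eventually_conj[OF h eventually_at_left_real[OF True]] show ?thesis
    proof eventually_elim
      case (elim t)
      then have "\<bar>t - y\<bar> < \<bar>x i - y\<bar>" using True by auto
      from closer_case[OF i k elim[THEN conjunct1] this] True show ?case by simp
    qed
  next
    case False
    with yp have yg: "x i < y" by simp
    have "x i - 1 < x i" by simp
    from eventually_conj[OF h eventually_at_left_real[OF this]] show ?thesis
    proof eventually_elim
      case (elim t)
      then have "\<bar>x i - y\<bar> < \<bar>t - y\<bar>" using yg by auto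
      from farther_case[OF i k elim[THEN conjunct1] this] False show ?case by simp
    qed
  qed
qed

lemma ev_right:
  assumes i: "i < m" and k: "k < m" "k \<noteq> i" "x k = x i"
    and H2: "\<forall>j<m. x j \<noteq> x i \<longrightarrow> \<bar>x i - y\<bar> \<noteq> \<bar>x j - y\<bar>" and yp: "y \<noteq> x i"
  shows "eventually (\<lambda>t. voter_points c m (x(i:=t)) i y = (if y < x i then Vf c m x i y else Vc m x i y)) (at_right (x i))"
proof -
  have h: "eventually (\<lambda>t. H1 m x (x i) y t) (at_right (x i))" by (rule ev_H1[OF tendsto_ident_at H2])
  show ?thesis
  proof (cases "y < x i")
    case True
    have "x i < x i + 1" by simp
    from eventually_conj[OF h eventually_at_right_real[OF this]] show ?thesis
    proof eventually_elim
      case (elim t)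
      then have "\<bar>x i - y\<bar> < \<bar>t - y\<bar>" using True by auto
      from farther_case[OF i k elim[THEN conjunct1] this] True show ?case by simp
    qed
  next
    case False
    with yp have yg: "x i < y" by simp
    from eventually_conj[OF h eventually_at_right_real[OF yg]] show ?thesis
    proof eventually_elim
      case (elim t)
      then have "\<bar>t - y\<bar> < \<bar>x i - y\<bar>" using yg by auto
      from closer_case[OF i k elim[THEN conjunct1] this] False show ?case by simp
    qed
  qed
qed

lemma dc_seq:
  fixes f :: "nat \<Rightarrow> real \<Rightarrow> real"
  assumes fi: "\<And>n. f n integrable_on {0..1}" and b: "\<And>n y. \<bar>f n y\<bar> \<le> B" and E: "negligible E"
    and conv: "\<And>y. y \<in> {0..1} \<Longrightarrow> y \<notin> E \<Longrightarrow> (\<lambda>n. f n y) \<longlonglongrightarrow> g y"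
  shows "(\<lambda>y. if y \<in> E then 0 else g y) integrable_on {0..1}"
    "(\<lambda>n. integral {0..1} (f n)) \<longlonglongrightarrow> integral {0..1} (\<lambda>y. if y \<in> E then 0 else g y)"
proof -
  define f' where "f' n y = (if y \<in> E then 0 else f n y)" for n y
  have fi': "f' n integrable_on {0..1}" for n
    by (rule integrable_spike[OF fi E]) (simp add: f'_def)
  have ieq: "integral {0..1} (f' n) = integral {0..1} (f n)" for n
    by (rule integral_spike[OF E]) (simp add: f'_def)
  have B0: "0 \<le> B" using b[of 0 0] by linarith
  have le: "norm (f' n y) \<le> B" if "y \<in> {0..1}" for n y using b[of n y] B0 by (simp add: f'_def)
  have cv: "(\<lambda>n. f' n y) \<longlonglongrightarrow> (if y \<in> E then 0 else g y)" if "y \<in> {0..1}" for y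
    using conv[OF that] by (simp add: f'_def)
  note D = dominated_convergence[OF fi' integrable_const_ivl le cv]
  show "(\<lambda>y. if y \<in> E then 0 else g y) integrable_on {0..1}" by (rule D(1))
  show "(\<lambda>n. integral {0..1} (f n)) \<longlonglongrightarrow> integral {0..1} (\<lambda>y. if y \<in> E then 0 else g y)"
    using D(2) by (simp add: ieq)
qed

lemma dc_filter:
  fixes f :: "real \<Rightarrow> real \<Rightarrow> real"
  assumes fi: "\<And>t. f t integrable_on {0..1}" and b: "\<And>t y. \<bar>f t y\<bar> \<le> B" and E: "negligible E"
    and ev: "\<And>y. y \<in> {0..1} \<Longrightarrow> y \<notin> E \<Longrightarrow> eventually (\<lambda>t. f t y = g y) (at p within S)"
  shows "((\<lambda>t. integral {0..1} (f t)) \<longlongrightarrow> integral {0..1} (\<lambda>y. if y \<in> E then 0 else g y)) (at p within S)"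
  unfolding tendsto_at_iff_sequentially
proof (intro allI impI)
  fix X :: "nat \<Rightarrow> real" assume X: "\<forall>i. X i \<in> S - {p}" "X \<longlonglongrightarrow> p"
  have fl: "filterlim X (at p within S) sequentially" using X by (auto simp: filterlim_at)
  have "(\<lambda>n. integral {0..1} (f (X n))) \<longlonglongrightarrow> integral {0..1} (\<lambda>y. if y \<in> E then 0 else g y)"
  proof (rule dc_seq(2)[OF fi b E])
    fix y assume "y \<in> {0..1}" "y \<notin> E"
    from eventually_compose_filterlim[OF ev[OF this] fl]
    show "(\<lambda>n. f (X n) y) \<longlonglongrightarrow> g y" by (rule tendsto_eventually)
  qed
  then show "((\<lambda>t. integral {0..1} (f t)) \<circ> X) \<longlonglongrightarrow> integral {0..1} (\<lambda>y. if y \<in> E then 0 else g y)"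
    by (simp add: o_def)
qed

lemma dc_int:
  fixes f :: "real \<Rightarrow> real \<Rightarrow> real"
  assumes fi: "\<And>t. f t integrable_on {0..1}" and b: "\<And>t y. \<bar>f t y\<bar> \<le> B" and E: "negligible E"
    and ev: "\<And>y. y \<in> {0..1} \<Longrightarrow> y \<notin> E \<Longrightarrow> eventually (\<lambda>t. f t y = g y) (at p within S)"
    and X: "\<forall>i. X i \<in> S - {p}" "X \<longlonglongrightarrow> p"
  shows "(\<lambda>y. if y \<in> E then 0 else g y) integrable_on {0..1}"
proof (rule dc_seq(1)[OF fi b E])
  have fl: "filterlim X (at p within S) sequentially" using X by (auto simp: filterlim_at)
  fix y assume "y \<in> {0..1}" "y \<notin> E"
  from eventually_compose_filterlim[OF ev[OF this] fl]
  show "(\<lambda>n. f (X n) y) \<longlonglongrightarrow> g y" by (rule tendsto_eventually)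
qed

lemma Vc_Vf_sign: "c \<ge> 0 \<Longrightarrow> Vf c m x i y \<le> 0 \<and> 0 \<le> Vc m x i y"
  by (simp add: Vc_def Vf_def)

theorem lemma2:
  fixes c :: real and m :: nat and x :: "nat \<Rightarrow> real" and i :: nat
  assumes "c \<ge> 0" and "m \<ge> 2"
    and "is_profile m x"
    and "card (x ` {..<m}) \<ge> 2"
    and "i < m"
    and "card {j. j < m \<and> x j = x i} = 2"
  shows "(\<exists>a b. ((\<lambda>t. score c m (x(i := t)) i) \<longlongrightarrow> a) (at_left (x i)) \<and>
                ((\<lambda>t. score c m (x(i := t)) i) \<longlongrightarrow> b) (at_right (x i)) \<and>
                a + b = 2 * score c m x i)
       \<and> (nash_eq c m x \<and> non_convergent m x \<longrightarrow>
            ((\<lambda>t. score c m (x(i := t)) i) \<longlongrightarrow> score c m x i) (at_left (x i)) \<and>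
            ((\<lambda>t. score c m (x(i := t)) i) \<longlongrightarrow> score c m x i) (at_right (x i)))"
proof -
  note i = assms(5) and card = assms(6)
  obtain k where k: "k < m" "k \<noteq> i" "x k = x i"
  proof -
    have "\<exists>k. k < m \<and> k \<noteq> i \<and> x k = x i"
    proof (rule ccontr)
      assume "\<not> (\<exists>k. k < m \<and> k \<noteq> i \<and> x k = x i)"
      then have "{j. j < m \<and> x j = x i} \<subseteq> {i}" by auto
      then have "card {j. j < m \<and> x j = x i} \<le> card {i}" by (intro card_mono) auto
      with card show False by simp
    qed
    then show ?thesis using that by blast
  qed
  define E where "E = insert (x i) ((\<lambda>j. (x i + x j) / 2) ` {..<m})"
  have negE: "negligible E" unfolding E_def by (intro negligible_finite) auto
  have H2: "\<forall>j<m. x j \<noteq> x i \<longrightarrow> \<bar>x i - y\<bar> \<noteq> \<bar>x j - y\<bar>" if yE: "y \<notin> E" for y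
  proof (intro allI impI notI)
    fix j assume j: "j < m" "x j \<noteq> x i" "\<bar>x i - y\<bar> = \<bar>x j - y\<bar>"
    then have "y = (x i + x j) / 2" by (cases "x i \<ge> y"; cases "x j \<ge> y") auto
    with j(1) yE show False unfolding E_def by auto
  qed
  have yE: "y \<noteq> x i" if "y \<notin> E" for y using that unfolding E_def by auto
  define gL where "gL y = (if y < x i then Vc m x i y else Vf c m x i y)" for y
  define gR where "gR y = (if y < x i then Vf c m x i y else Vc m x i y)" for y
  define f where "f t = voter_points c m (x(i:=t)) i" for t
  define GL where "GL = (\<lambda>y. if y \<in> E then 0 else gL y)"
  define GR where "GR = (\<lambda>y. if y \<in> E then 0 else gR y)"
  have fi: "\<And>t. f t integrable_on {0..1}" by (simp add: f_def vp_int)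
  have fb: "\<And>t y. \<bar>f t y\<bar> \<le> 1 + \<bar>c\<bar>" by (simp add: f_def vp_bound)
  have evL: "eventually (\<lambda>t. f t y = gL y) (at_left (x i))" if "y \<in> {0..1}" "y \<notin> E" for y
    unfolding f_def gL_def by (rule ev_left[OF i k H2[OF that(2)] yE[OF that(2)]])
  have evR: "eventually (\<lambda>t. f t y = gR y) (at_right (x i))" if "y \<in> {0..1}" "y \<notin> E" for y
    unfolding f_def gR_def by (rule ev_right[OF i k H2[OF that(2)] yE[OF that(2)]])
  have sc: "score c m (x(i:=t)) i = integral {0..1} (f t)" for t by (simp add: score_def f_def)
  have limL: "((\<lambda>t. score c m (x(i:=t)) i) \<longlongrightarrow> integral {0..1} GL) (at_left (x i))"
    unfolding sc GL_def by (rule dc_filter[OF fi fb negE evL])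
  have limR: "((\<lambda>t. score c m (x(i:=t)) i) \<longlongrightarrow> integral {0..1} GR) (at_right (x i))"
    unfolding sc GR_def by (rule dc_filter[OF fi fb negE evR])
  have inv0: "(\<lambda>n. inverse (real (Suc n))) \<longlonglongrightarrow> 0" by (rule LIMSEQ_inverse_real_of_nat)
  have intL: "GL integrable_on {0..1}"
    unfolding GL_def
  proof (rule dc_int[OF fi fb negE evL, where X = "\<lambda>n. x i - inverse (real (Suc n))"])
    show "\<forall>n. x i - inverse (real (Suc n)) \<in> {..<x i} - {x i}" by simp
    show "(\<lambda>n. x i - inverse (real (Suc n))) \<longlonglongrightarrow> x i"
      using tendsto_diff[OF tendsto_const inv0, of "x i"] by simp
  qed
  have intR: "GR integrable_on {0..1}"
    unfolding GR_def
  proof (rule dc_int[OF fi fb negE evR, where X = "\<lambda>n. x i + inverse (real (Suc n))"])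
    show "\<forall>n. x i + inverse (real (Suc n)) \<in> {x i<..} - {x i}" by simp
    show "(\<lambda>n. x i + inverse (real (Suc n))) \<longlonglongrightarrow> x i"
      using tendsto_add[OF tendsto_const inv0, of "x i"] by simp
  qed
  define v where "v = score c m x i"
  have vint: "voter_points c m x i integrable_on {0..1}" by (rule vp_int)
  have mid: "voter_points c m x i y = (Vc m x i y + Vf c m x i y) / 2" if "y \<notin> E" for y
    by (rule mid_case[OF i card H2[OF that]])
  have sum: "integral {0..1} GL + integral {0..1} GR = 2 * v"
  proof -
    have "integral {0..1} GL + integral {0..1} GR = integral {0..1} (\<lambda>y. GL y + GR y)"
      by (rule integral_add[symmetric, OF intL intR])
    also have "\<dots> = integral {0..1} (\<lambda>y. 2 *\<^sub>R voter_points c m x i y)"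
    proof (rule integral_spike[OF negE])
      fix y assume "y \<in> {0..1} - E"
      then show "2 *\<^sub>R voter_points c m x i y = GL y + GR y"
        using mid[of y] by (simp add: GL_def GR_def gL_def gR_def)
    qed
    also have "\<dots> = 2 * v" by (simp add: v_def score_def)
    finally show ?thesis .
  qed
  have V': "integral {0..1} (\<lambda>y. if y \<in> E then 0 else voter_points c m x i y) = v"
    unfolding v_def score_def by (rule integral_spike[OF negE]) simp
  have intV': "(\<lambda>y. if y \<in> E then 0 else voter_points c m x i y) integrable_on {0..1}"
    by (rule integrable_spike[OF vint negE]) simp
  have part2: "((\<lambda>t. score c m (x(i := t)) i) \<longlongrightarrow> score c m x i) (at_left (x i)) \<and>
            ((\<lambda>t. score c m (x(i := t)) i) \<longlongrightarrow> score c m x i) (at_right (x i))"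
    if ne: "nash_eq c m x"
  proof -
    have xi01: "x i \<in> {0..1}" using assms(3) i unfolding is_profile_def by blast
    have nash: "score c m (x(i := t)) i \<le> v" if "t \<in> {0..1}" for t
      using ne i that unfolding nash_eq_def v_def by blast
    have aL: "integral {0..1} GL \<le> v"
    proof (cases "x i > 0")
      case True
      have "eventually (\<lambda>t. score c m (x(i := t)) i \<le> v) (at_left (x i))"
        using eventually_at_left_real[OF True]
      proof eventually_elim
        case (elim t) then show ?case using xi01 by (intro nash) auto
      qed
      from tendsto_le[OF trivial_limit_at_left_real tendsto_const limL this] show ?thesis .
    next
      case False
      with xi01 have x0: "x i = 0" by simp
      have "integral {0..1} GL \<le> integral {0..1} (\<lambda>y. if y \<in> E then 0 else voter_points c m x i y)"
      proof (rule integral_le[OF intL intV'])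
        fix y :: real assume y: "y \<in> {0..1}"
        show "GL y \<le> (if y \<in> E then 0 else voter_points c m x i y)"
        proof (cases "y \<in> E")
          case False
          with yE[OF False] y x0 have "\<not> y < x i" by auto
          then show ?thesis using False mid[OF False] Vc_Vf_sign[OF assms(1), of m x i y]
            by (simp add: GL_def gL_def)
        qed (simp add: GL_def)
      qed
      with V' show ?thesis by simp
    qed
    have bR: "integral {0..1} GR \<le> v"
    proof (cases "x i < 1")
      case True
      have "eventually (\<lambda>t. score c m (x(i := t)) i \<le> v) (at_right (x i))"
        using eventually_at_right_real[OF True]
      proof eventually_elim
        case (elim t) then show ?case using xi01 by (intro nash) auto
      qed
      from tendsto_le[OF trivial_limit_at_right_real tendsto_const limR this] show ?thesis .
    next
      case False
      with xi01 have x1: "x i = 1" by simp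
      have "integral {0..1} GR \<le> integral {0..1} (\<lambda>y. if y \<in> E then 0 else voter_points c m x i y)"
      proof (rule integral_le[OF intR intV'])
        fix y :: real assume y: "y \<in> {0..1}"
        show "GR y \<le> (if y \<in> E then 0 else voter_points c m x i y)"
        proof (cases "y \<in> E")
          case False
          with yE[OF False] y x1 have "y < x i" by auto
          then show ?thesis using False mid[OF False] Vc_Vf_sign[OF assms(1), of m x i y]
            by (simp add: GR_def gR_def)
        qed (simp add: GR_def)
      qed
      with V' show ?thesis by simp
    qed
    from aL bR sum have "integral {0..1} GL = v" "integral {0..1} GR = v" by linarith+
    with limL limR show ?thesis unfolding v_def by simp
  qed
  show ?thesis
  proof (intro conjI impI)
    show "\<exists>a b. ((\<lambda>t. score c m (x(i := t)) i) \<longlongrightarrow> a) (at_left (x i)) \<and>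
                ((\<lambda>t. score c m (x(i := t)) i) \<longlongrightarrow> b) (at_right (x i)) \<and>
                a + b = 2 * score c m x i"
      using limL limR sum unfolding v_def by blast
  qed (use part2 in auto)
qed

end
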